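(* Let $k$ be a field containing all $m$-th roots of unity, with $p\nmid m$ if $\operatorname{char}(k)=p>0$. Let $\mathcal A$ be a perfect $k$-algebra, $S$ a commutative associative unital $k$-algebra, $\sigma_1\in\operatorname{Aut}(\mathcal A)$, $\sigma_2\in\operatorname{Aut}(S)$ with $\sigma_1^m=\mathrm{id}$, $\sigma_2^m=\mathrm{id}$, and suppose $S_{\bar 1}$ contains an invertible element $u$ of $S$. Let $d\in\mathcal D((\mathcal A\otimes S)_{\bar 0})$, $i,n\in\mathbb Z$ and $a\in\mathcal A_{\bar i}$. Then $$u^{-nm}d(a\otimes u^{-i+nm})+u^{nm}d(a\otimes u^{-i-nm})=2d(a\otimes u^{-i}),$$ $$u^{-nm}d(a\otimes u^{-i+nm})+nu^{m}d(a\otimes u^{-i-m})=(1+n)d(a\otimes u^{-i}),$$ $$u^{-nm}d(a\otimes u^{-i+nm})-nu^{-m}d(a\otimes u^{-i+m})=(1-n)d(a\otimes u^{-i}).$$ In particular, for $a_{\bar i}\in\mathcal A_{\bar i}$ and $a_{\bar j}\in\mathcal A_{\bar j}$, $$u^{\epsilon(\bar i+\bar j)}\big[u^{-m}d(a_{\bar i}a_{\bar j}\otimes u^{-\epsilon(\bar i+\bar j)+m})-d(a_{\bar i}a_{\bar j}\otimes u^{-\epsilon(\bar i+\bar j)})\big] = u^{\epsilon(\bar i)+\epsilon(\bar j)}\big[u^{-m}d(a_{\bar i}a_{\bar j}\otimes u^{-\epsilon(\bar i)-\epsilon(\bar j)+m})-d(a_{\bar i}a_{\bar j}\otimes u^{-\epsilon(\bar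 i)-\epsilon(\bar j)})\big].$$
   Context: Algebras are $k$-vector spaces with bilinear product (not necessarily associative); perfect means $\mathcal A\mathcal A=\mathcal A$; $\mathcal D$ denotes derivations. Fix a primitive $m$-th root of unity $\omega$; $\mathcal A_{\bar i}=\{a\mid\sigma_1(a)=\omega^ia\}$, $S_{\bar i}=\{s\mid\sigma_2(s)=\omega^is\}$, $(\mathcal A\otimes S)_{\bar 0}=\sum_{\bar j}\mathcal A_{-\bar j}\otimes S_{\bar j}$ is the fixed-point subalgebra of $\sigma_1\otimes\sigma_2$. For $\bar i\in\mathbb Z_m$, $\epsilon(\bar i)$ is its unique representative in $\{0,\dots,m-1\}$. $\mathcal A\otimes S$ is an $S$-bimodule via $s'(a\otimes s)=(a\otimes s)s'=a\otimes ss'$, and products of elements of $S$ with elements of $\mathcal A\otimes S$ denote this action. *)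

theory Defs
  imports Complex_Main
begin

definition bilinear_map ::
  "('k::field \<Rightarrow> 'v::ab_group_add \<Rightarrow> 'v) \<Rightarrow> ('k \<Rightarrow> 'w::ab_group_add \<Rightarrow> 'w)
   \<Rightarrow> ('k \<Rightarrow> 'u::ab_group_add \<Rightarrow> 'u) \<Rightarrow> ('v \<Rightarrow> 'w \<Rightarrow> 'u) \<Rightarrow> bool" where
  "bilinear_map sV sW sU f \<longleftrightarrow>
     (\<forall>w. Vector_Spaces.linear sV sU (\<lambda>v. f v w)) \<and> (\<forall>v. Vector_Spaces.linear sW sU (f v))"

definition k_algebra ::
  "('k::field \<Rightarrow> 'a::ab_group_add \<Rightarrow> 'a) \<Rightarrow> ('a \<Rightarrow> 'a \<Rightarrow> 'a) \<Rightarrow> bool" where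
  "k_algebra sA mA \<longleftrightarrow> vector_space sA \<and> bilinear_map sA sA sA mA"

definition perfect_algebra ::
  "('k::field \<Rightarrow> 'a::ab_group_add \<Rightarrow> 'a) \<Rightarrow> ('a \<Rightarrow> 'a \<Rightarrow> 'a) \<Rightarrow> bool" where
  "perfect_algebra sA mA \<longleftrightarrow> module.span sA {mA x y | x y. True} = UNIV"

(* S is a commutative associative unital k-algebra (ring structure from the type class) *)
definition comm_unital_k_algebra ::
  "('k::field \<Rightarrow> 's::comm_ring_1 \<Rightarrow> 's) \<Rightarrow> bool" where
  "comm_unital_k_algebra sS \<longleftrightarrow> vector_space sS \<and> (\<forall>c x y. sS c (x * y) = sS c x * y)"

definition alg_automorphism ::
  "('k::field \<Rightarrow> 'a::ab_group_add \<Rightarrow> 'a) \<Rightarrow> ('a \<Rightarrow> 'a \<Rightarrow> 'a) \<Rightarrow> ('a \<Rightarrow> 'a) \<Rightarrow> bool" where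
  "alg_automorphism sA mA \<sigma> \<longleftrightarrow>
     Vector_Spaces.linear sA sA \<sigma> \<and> bij \<sigma> \<and> (\<forall>x y. \<sigma> (mA x y) = mA (\<sigma> x) (\<sigma> y))"

definition primitive_root_of_unity :: "nat \<Rightarrow> 'k::field \<Rightarrow> bool" where
  "primitive_root_of_unity m \<omega> \<longleftrightarrow> \<omega> ^ m = 1 \<and> (\<forall>j. 0 < j \<and> j < m \<longrightarrow> \<omega> ^ j \<noteq> 1)"

(* eigenspace  X_{bar i} = {x | sigma x = omega^i x}  (i an integer, read modulo m) *)
definition eigsp :: "('k::field \<Rightarrow> 'a \<Rightarrow> 'a) \<Rightarrow> ('a \<Rightarrow> 'a) \<Rightarrow> 'k \<Rightarrow> int \<Rightarrow> 'a set" where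
  "eigsp s \<sigma> \<omega> i = {x. \<sigma> x = s (\<omega> powi i) x}"

(* T together with tp : A x S -> T is a tensor product A \<otimes>_k S:
   tp is bilinear, the pure tensors span T, and for every finite linearly independent
   family (a_x) in A, sum a_x \<otimes> s_x = 0 forces all s_x = 0 *)
definition is_tensor_product ::
  "('k::field \<Rightarrow> 'a::ab_group_add \<Rightarrow> 'a) \<Rightarrow> ('k \<Rightarrow> 's::ab_group_add \<Rightarrow> 's)
   \<Rightarrow> ('k \<Rightarrow> 't::ab_group_add \<Rightarrow> 't) \<Rightarrow> ('a \<Rightarrow> 's \<Rightarrow> 't) \<Rightarrow> bool" where
  "is_tensor_product sA sS sT tp \<longleftrightarrow>
     vector_space sT \<and> bilinear_map sA sS sT tp \<and>
     module.span sT (range (\<lambda>(a, s). tp a s)) = UNIV \<and>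
     (\<forall>F f. finite F \<and> \<not> module.dependent sA F \<and> (\<Sum>a\<in>F. tp a (f a)) = 0
            \<longrightarrow> (\<forall>a\<in>F. f a = 0))"

definition fixed_subalg ::
  "('k::field \<Rightarrow> 't::ab_group_add \<Rightarrow> 't) \<Rightarrow> ('a \<Rightarrow> 's \<Rightarrow> 't) \<Rightarrow> 'k
   \<Rightarrow> ('k \<Rightarrow> 'a \<Rightarrow> 'a) \<Rightarrow> ('a \<Rightarrow> 'a) \<Rightarrow> ('k \<Rightarrow> 's \<Rightarrow> 's) \<Rightarrow> ('s \<Rightarrow> 's) \<Rightarrow> 't set" where
  "fixed_subalg sT tp \<omega> sA \<sigma>1 sS \<sigma>2 =
     module.span sT {tp a s | a s j. a \<in> eigsp sA \<sigma>1 \<omega> (- j) \<and> s \<in> eigsp sS \<sigma>2 \<omega> j}"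

definition is_derivation_on ::
  "('k::field \<Rightarrow> 't::ab_group_add \<Rightarrow> 't) \<Rightarrow> ('t \<Rightarrow> 't \<Rightarrow> 't) \<Rightarrow> 't set \<Rightarrow> ('t \<Rightarrow> 't) \<Rightarrow> bool" where
  "is_derivation_on sT mT B d \<longleftrightarrow>
     (\<forall>x\<in>B. d x \<in> B) \<and>
     (\<forall>x\<in>B. \<forall>y\<in>B. d (x + y) = d x + d y) \<and>
     (\<forall>c. \<forall>x\<in>B. d (sT c x) = sT c (d x)) \<and>
     (\<forall>x\<in>B. \<forall>y\<in>B. d (mT x y) = mT (d x) y + mT x (d y))"

definition zpow :: "'s::comm_ring_1 \<Rightarrow> int \<Rightarrow> 's" where
  "zpow u z = (if 0 \<le> z then u ^ nat z else (SOME v. u * v = 1) ^ nat (- z))"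

definition eps :: "nat \<Rightarrow> int \<Rightarrow> int" where
  "eps m i = i mod int m"

end

theory Submission
  imports Defs
begin


lemma zpow_0[simp]: "zpow u 0 = 1" by (simp add: zpow_def)

lemma zpow_succ:
  fixes u :: "'s::comm_ring_1"
  assumes "\<exists>v. u * v = 1"
  shows "zpow u (z + 1) = zpow u z * u"
proof -
  define v where "v = (SOME v. u * v = 1)"
  have uv: "u * v = 1" using someI_ex[OF assms] v_def by simp
  have zv: "\<And>z. zpow u z = (if 0 \<le> z then u ^ nat z else v ^ nat (-z))" unfolding zpow_def v_def by simp
  consider "z \<ge> 0" | "z = -1" | "z < -1" by linarith
  then show ?thesis
  proof cases
    case 1
    then have "nat (z+1) = Suc (nat z)" by simp
    then show ?thesis using 1 by (simp add: zv v_def[symmetric] algebra_simps)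
  next
    case 2 then show ?thesis using uv by (simp add: zv v_def[symmetric] algebra_simps)
  next
    case 3
    then have "nat (-z) = Suc (nat (-(z+1)))" by simp
    then show ?thesis using 3 uv by (simp add: zv) (metis mult.assoc mult.commute mult_1_right)
  qed
qed

lemma zpow_pred:
  fixes u :: "'s::comm_ring_1"
  assumes "\<exists>v. u * v = 1"
  shows "zpow u (z - 1) = zpow u z * (SOME v. u * v = 1)"
proof -
  define v where "v = (SOME v. u * v = 1)"
  have uv: "u * v = 1" using someI_ex[OF assms] v_def by simp
  have zv: "\<And>z. zpow u z = (if 0 \<le> z then u ^ nat z else v ^ nat (-z))" unfolding zpow_def v_def by simp
  consider "z \<ge> 1" | "z \<le> 0" by linarith
  then show ?thesis
  proof cases
    case 1
    then have "nat z = Suc (nat (z - 1))" by simp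
    then have "zpow u (z - 1) = zpow u z * v" using 1 uv by (simp add: zv) (metis mult.assoc mult.commute mult_1_right)
    then show ?thesis by (simp add: v_def)
  next
    case 2
    then have "nat (-(z - 1)) = Suc (nat (-z))" by simp
    then have "zpow u (z - 1) = zpow u z * v" using 2 uv by (simp add: zv mult.commute)
    then show ?thesis by (simp add: v_def)
  qed
qed

lemma zpow_add:
  fixes u :: "'s::comm_ring_1"
  assumes "\<exists>v. u * v = 1"
  shows "zpow u a * zpow u b = zpow u (a + b)"
proof (induct b rule: int_induct[where k=0])
  case base then show ?case by simp
next
  case (step1 i)
  have "zpow u a * zpow u (i + 1) = zpow u a * zpow u i * u" using zpow_succ[OF assms] by (simp add: mult.assoc)
  also have "\<dots> = zpow u (a + i + 1)" using step1(2) zpow_succ[OF assms] by simp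
  finally show ?case by (simp add: add.assoc)
next
  case (step2 i)
  have "zpow u a * zpow u (i - 1) = zpow u a * zpow u i * (SOME v. u * v = 1)" using zpow_pred[OF assms] by (simp add: mult.assoc)
  also have "\<dots> = zpow u (a + i - 1)" using step2(2) zpow_pred[OF assms] by simp
  finally show ?case by (simp add: add_diff_eq)
qed



lemma root_nz: "primitive_root_of_unity m (\<omega>::'k::field) \<Longrightarrow> 0 < m \<Longrightarrow> \<omega> \<noteq> 0"
  unfolding primitive_root_of_unity_def by (cases m) auto

lemma powi_period:
  assumes om: "primitive_root_of_unity m (\<omega>::'k::field)" and m: "0 < m"
  shows "\<omega> powi (t + k * int m) = \<omega> powi t"
proof -
  have nz: "\<omega> \<noteq> 0" using root_nz[OF om m] .
  have "\<omega> powi (k * int m) = \<omega> powi (int m * k)" by (simp add: mult.commute)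
  also have "\<dots> = (\<omega> powi int m) powi k" by (rule power_int_mult)
  also have "\<dots> = 1" using om by (simp add: primitive_root_of_unity_def)
  finally show ?thesis using nz by (simp add: power_int_add)
qed

lemma powi_mod:
  assumes om: "primitive_root_of_unity m (\<omega>::'k::field)" and m: "0 < m"
  shows "\<omega> powi t = \<omega> ^ nat (t mod int m)"
proof -
  have "t = t mod int m + (t div int m) * int m" by simp
  then have "\<omega> powi t = \<omega> powi (t mod int m + (t div int m) * int m)" by simp
  also have "\<dots> = \<omega> powi (t mod int m)" by (rule powi_period[OF om m])
  also have "\<dots> = \<omega> ^ nat (t mod int m)"
  proof -
    have "t mod int m = int (nat (t mod int m))" using m by simp
    then show ?thesis by (metis power_int_of_nat)
  qed
  finally show ?thesis .
qed

lemma powi_cong: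
  assumes om: "primitive_root_of_unity m (\<omega>::'k::field)" and m: "0 < m"
    and "s mod int m = t mod int m"
  shows "\<omega> powi s = \<omega> powi t"
  using powi_mod[OF om m, of s] powi_mod[OF om m, of t] assms(3) by simp

lemma orth:
  assumes om: "primitive_root_of_unity m (\<omega>::'k::field)" and m: "0 < m"
  shows "(\<Sum>k<m. (\<omega> powi t) ^ k) = (if int m dvd t then of_nat m else 0)"
proof (cases "int m dvd t")
  case True
  then have "t mod int m = 0" by simp
  then have "\<omega> powi t = 1" using powi_mod[OF om m, of t] by simp
  then show ?thesis using True by simp
next
  case False
  define r where "r = nat (t mod int m)"
  have r: "0 < r" "r < m"
  proof -
    have "t mod int m \<noteq> 0" using False by (simp add: dvd_eq_mod_eq_0)
    moreover have "0 \<le> t mod int m" "t mod int m < int m" using m by simp_all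
    ultimately show "0 < r" "r < m" unfolding r_def by linarith+
  qed
  have w: "\<omega> powi t = \<omega> ^ r" using powi_mod[OF om m] r_def by simp
  have ne: "\<omega> ^ r \<noteq> 1" using om r unfolding primitive_root_of_unity_def by auto
  have "(\<omega> ^ r) ^ m = (\<omega> ^ m) ^ r" by (metis power_mult mult.commute)
  then have "(\<omega> ^ r) ^ m = 1" using om by (simp add: primitive_root_of_unity_def)
  then show ?thesis using False w geometric_sum[OF ne, of m] by simp
qed



lemma lin_add: "Vector_Spaces.linear s1 s2 f \<Longrightarrow> f (x + y) = f x + f y"
  by (simp add: Vector_Spaces.linear_iff)
lemma lin_scale: "Vector_Spaces.linear s1 s2 f \<Longrightarrow> f (s1 c x) = s2 c (f x)"
  by (simp add: Vector_Spaces.linear_iff)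
lemma lin_additive: "Vector_Spaces.linear s1 s2 f \<Longrightarrow> additive f"
  by (simp add: additive.intro lin_add)
lemma lin_zero: "Vector_Spaces.linear s1 s2 f \<Longrightarrow> f 0 = 0"
  using additive.zero[OF lin_additive] by blast
lemma lin_diff: "Vector_Spaces.linear s1 s2 f \<Longrightarrow> f (x - y) = f x - f y"
  using additive.diff[OF lin_additive] by blast
lemma lin_sum: "Vector_Spaces.linear s1 s2 f \<Longrightarrow> f (sum g A) = (\<Sum>x\<in>A. f (g x))"
  using additive.sum[OF lin_additive] by blast
lemma lin_vs1: "Vector_Spaces.linear s1 s2 f \<Longrightarrow> vector_space s1"
  by (simp add: Vector_Spaces.linear_iff)
lemma lin_vs2: "Vector_Spaces.linear s1 s2 f \<Longrightarrow> vector_space s2"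
  by (simp add: Vector_Spaces.linear_iff)

locale L4 =
  fixes sA :: "'k::field \<Rightarrow> 'a::ab_group_add \<Rightarrow> 'a" and mA :: "'a \<Rightarrow> 'a \<Rightarrow> 'a"
    and sS :: "'k \<Rightarrow> 's::comm_ring_1 \<Rightarrow> 's"
    and sT :: "'k \<Rightarrow> 't::ab_group_add \<Rightarrow> 't" and tp :: "'a \<Rightarrow> 's \<Rightarrow> 't"
    and mT :: "'t \<Rightarrow> 't \<Rightarrow> 't" and act :: "'s \<Rightarrow> 't \<Rightarrow> 't"
    and m :: nat and \<omega> :: 'k
    and \<sigma>1 :: "'a \<Rightarrow> 'a" and \<sigma>2 :: "'s \<Rightarrow> 's"
    and u :: 's and d :: "'t \<Rightarrow> 't"
  assumes m_pos: "0 < m" and char: "of_nat m \<noteq> (0::'k)"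
    and omega: "primitive_root_of_unity m \<omega>"
    and A_alg: "k_algebra sA mA" and A_perfect: "perfect_algebra sA mA"
    and S_alg: "comm_unital_k_algebra sS"
    and tensor: "is_tensor_product sA sS sT tp"
    and mT_bil: "bilinear_map sT sT sT mT"
    and mT_tp: "\<And>a b s t. mT (tp a s) (tp b t) = tp (mA a b) (s * t)"
    and act_lin: "\<And>s. Vector_Spaces.linear sT sT (act s)"
    and act_tp: "\<And>s' a s. act s' (tp a s) = tp a (s * s')"
    and sigma1: "alg_automorphism sA mA \<sigma>1" and sigma1_m: "\<sigma>1 ^^ m = id"
    and sigma2: "alg_automorphism sS (*) \<sigma>2" and sigma2_one: "\<sigma>2 1 = 1"
    and sigma2_m: "\<sigma>2 ^^ m = id"
    and u_deg: "u \<in> eigsp sS \<sigma>2 \<omega> 1" and u_unit: "\<exists>v. u * v = 1"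
    and d_der: "is_derivation_on sT mT (fixed_subalg sT tp \<omega> sA \<sigma>1 sS \<sigma>2) d"

sublocale L4 \<subseteq> A: vector_space sA
  using A_alg by (simp add: k_algebra_def)
sublocale L4 \<subseteq> S: vector_space sS
  using S_alg by (simp add: comm_unital_k_algebra_def)
sublocale L4 \<subseteq> T: vector_space sT
  using tensor by (simp add: is_tensor_product_def)

context L4 begin

abbreviation "Aeig i \<equiv> eigsp sA \<sigma>1 \<omega> i"
abbreviation "B \<equiv> fixed_subalg sT tp \<omega> sA \<sigma>1 sS \<sigma>2"

lemma tp_lin_left: "Vector_Spaces.linear sA sT (\<lambda>a. tp a s)"
  using tensor by (simp add: is_tensor_product_def bilinear_map_def)
lemma tp_add_left: "tp (a + b) s = tp a s + tp b s"
  using lin_add[OF tp_lin_left] .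
lemma tp_scale_left: "tp (sA c a) s = sT c (tp a s)"
  using lin_scale[OF tp_lin_left] .
lemma tp_zero_left: "tp 0 s = 0"
  using lin_zero[OF tp_lin_left] .

lemma mT_lin_left: "Vector_Spaces.linear sT sT (\<lambda>X. mT X Y)"
  using mT_bil by (simp add: bilinear_map_def)
lemma mT_lin_right: "Vector_Spaces.linear sT sT (mT X)"
  using mT_bil by (simp add: bilinear_map_def)

lemma T_span: "T.span (range (\<lambda>(a, s). tp a s)) = UNIV"
  using tensor by (simp add: is_tensor_product_def)

lemma T_ext:
  assumes f: "Vector_Spaces.linear sT sT f" and g: "Vector_Spaces.linear sT sT g"
    and eq: "\<And>a s. f (tp a s) = g (tp a s)"
  shows "f X = g X"
proof -
  have vp: "vector_space_pair sT sT" unfolding vector_space_pair_def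
    by (simp add: T.vector_space_axioms)
  show ?thesis
    by (rule vector_space_pair.linear_eq_on[OF vp f g, of X "range (\<lambda>(a, s). tp a s)"])
       (auto simp: T_span eq)
qed

lemma act_act: "act s (act s' X) = act (s * s') X"
proof -
  have "(act s \<circ> act s') X = act (s * s') X"
    by (rule T_ext[of "act s \<circ> act s'" "act (s * s')"]) (auto intro: Vector_Spaces.linear_compose act_lin simp: act_tp ac_simps)
  then show ?thesis by simp
qed

lemma act_one: "act 1 X = X"
proof -
  have "act 1 X = id X"
    by (rule T_ext[of "act 1" id]) (auto simp: act_tp act_lin T.linear_id)
  then show ?thesis by simp
qed

lemma act_add: "act s (X + Y) = act s X + act s Y"
  using lin_add[OF act_lin] .
lemma act_diff: "act s (X - Y) = act s X - act s Y"
  using lin_diff[OF act_lin] .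
lemma act_scale: "act s (sT c X) = sT c (act s X)"
  using lin_scale[OF act_lin] .

lemma mT_act_left: "mT (act s X) Y = act s (mT X Y)"
proof -
  have "((\<lambda>X. mT X Y) \<circ> act s) X = (act s \<circ> (\<lambda>X. mT X Y)) X"
  proof (rule T_ext[of "(\<lambda>X. mT X Y) \<circ> act s" "act s \<circ> (\<lambda>X. mT X Y)"])
    show "Vector_Spaces.linear sT sT ((\<lambda>X. mT X Y) \<circ> act s)"
      by (rule Vector_Spaces.linear_compose[OF act_lin mT_lin_left])
    show "Vector_Spaces.linear sT sT (act s \<circ> (\<lambda>X. mT X Y))"
      by (rule Vector_Spaces.linear_compose[OF mT_lin_left act_lin])
    fix a t
    have "mT (tp a (t * s)) Y = act s (mT (tp a t) Y)"
    proof -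
      have "(mT (tp a (t * s))) Y = (act s \<circ> mT (tp a t)) Y"
        by (rule T_ext[of "mT (tp a (t * s))" "act s \<circ> mT (tp a t)", OF mT_lin_right Vector_Spaces.linear_compose[OF mT_lin_right act_lin]])
           (simp add: mT_tp act_tp ac_simps)
      then show ?thesis by simp
    qed
    then show "((\<lambda>X. mT X Y) \<circ> act s) (tp a t) = (act s \<circ> (\<lambda>X. mT X Y)) (tp a t)"
      by (simp add: act_tp)
  qed
  then show ?thesis by simp
qed

lemma mT_act_right: "mT X (act s Y) = act s (mT X Y)"
proof -
  have "(mT X \<circ> act s) Y = (act s \<circ> mT X) Y"
  proof (rule T_ext[of "mT X \<circ> act s" "act s \<circ> mT X"])
    show "Vector_Spaces.linear sT sT (mT X \<circ> act s)"
      by (rule Vector_Spaces.linear_compose[OF act_lin mT_lin_right])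
    show "Vector_Spaces.linear sT sT (act s \<circ> mT X)"
      by (rule Vector_Spaces.linear_compose[OF mT_lin_right act_lin])
    fix b r
    have "mT X (tp b (r * s)) = act s (mT X (tp b r))"
    proof -
      have "(\<lambda>X. mT X (tp b (r * s))) X = (act s \<circ> (\<lambda>X. mT X (tp b r))) X"
        by (rule T_ext[of "\<lambda>X. mT X (tp b (r * s))" "act s \<circ> (\<lambda>X. mT X (tp b r))", OF mT_lin_left Vector_Spaces.linear_compose[OF mT_lin_left act_lin]])
           (simp add: mT_tp act_tp ac_simps)
      then show ?thesis by simp
    qed
    then show "(mT X \<circ> act s) (tp b r) = (act s \<circ> mT X) (tp b r)"
      by (simp add: act_tp)
  qed
  then show ?thesis by simp
qed


lemma zadd: "zpow u a * zpow u b = zpow u (a + b)"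
  using zpow_add[OF u_unit] .

lemma om_nz: "\<omega> \<noteq> 0" using root_nz[OF omega m_pos] .

lemma eigsp_cong: "s mod int m = t mod int m \<Longrightarrow> eigsp sc \<sigma> \<omega> s = eigsp sc \<sigma> \<omega> t"
  unfolding eigsp_def using powi_cong[OF omega m_pos] by metis

lemma S_scale_mult: "sS c (x * y) = sS c x * y"
  using S_alg by (simp add: comm_unital_k_algebra_def)

lemma sS_mult: "sS a x * sS b y = sS (a * b) (x * y)"
proof -
  have "sS a x * sS b y = sS a (x * sS b y)" by (simp add: S_scale_mult)
  also have "x * sS b y = sS b (y * x)" by (metis S_scale_mult mult.commute)
  finally show ?thesis by (simp add: mult.commute)
qed

lemma sig2_mult: "\<sigma>2 (x * y) = \<sigma>2 x * \<sigma>2 y"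
  using sigma2 by (simp add: alg_automorphism_def)

lemma sig2_pow: "\<sigma>2 w = sS c w \<Longrightarrow> \<sigma>2 (w ^ n) = sS (c ^ n) (w ^ n)"
proof (induct n)
  case 0 then show ?case by (simp add: sigma2_one)
next
  case (Suc n) then show ?case by (simp add: sig2_mult sS_mult)
qed

definition "uinv = (SOME v. u * v = 1)"

lemma u_uinv: "u * uinv = 1"
  using someI_ex[OF u_unit] by (simp add: uinv_def)

lemma sig2_u: "\<sigma>2 u = sS \<omega> u"
  using u_deg by (simp add: eigsp_def)

lemma sig2_uinv: "\<sigma>2 uinv = sS (inverse \<omega>) uinv"
proof -
  have h1: "sS \<omega> u * \<sigma>2 uinv = 1"
    using sig2_mult[of u uinv] u_uinv sig2_u sigma2_one by simp
  have h2: "sS \<omega> u * sS (inverse \<omega>) uinv = 1"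
    using om_nz by (simp add: sS_mult u_uinv)
  have "\<sigma>2 uinv = \<sigma>2 uinv * (sS \<omega> u * sS (inverse \<omega>) uinv)" using h2 by simp
  also have "\<dots> = (sS \<omega> u * \<sigma>2 uinv) * sS (inverse \<omega>) uinv" by (simp add: ac_simps)
  finally show ?thesis using h1 by simp
qed

lemma zpow_eig: "\<sigma>2 (zpow u z) = sS (\<omega> powi z) (zpow u z)"
proof (cases "0 \<le> z")
  case True
  then show ?thesis using sig2_pow[OF sig2_u] by (simp add: zpow_def power_int_def)
next
  case False
  then show ?thesis using sig2_pow[OF sig2_uinv] by (simp add: zpow_def power_int_def uinv_def[symmetric])
qed

lemma tpB: "x \<in> Aeig j \<Longrightarrow> (j + z) mod int m = 0 \<Longrightarrow> tp x (zpow u z) \<in> B"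
proof -
  assume x: "x \<in> Aeig j" and jz: "(j + z) mod int m = 0"
  have "(- z) mod int m = j mod int m" using jz by (metis add.commute add_0 diff_minus_eq_add mod_0 mod_diff_right_eq minus_add_cancel mod_add_cong)
  then have "x \<in> Aeig (- z)" using x eigsp_cong by metis
  moreover have "zpow u z \<in> eigsp sS \<sigma>2 \<omega> z" by (simp add: eigsp_def zpow_eig)
  ultimately show ?thesis unfolding fixed_subalg_def by (intro T.span_base) blast
qed

lemma B_sub: "T.subspace B" unfolding fixed_subalg_def by simp

lemma d_add: "X \<in> B \<Longrightarrow> Y \<in> B \<Longrightarrow> d (X + Y) = d X + d Y"
  using d_der by (simp add: is_derivation_on_def)
lemma d_scale: "X \<in> B \<Longrightarrow> d (sT c X) = sT c (d X)"
  using d_der by (simp add: is_derivation_on_def)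
lemma d_mult: "X \<in> B \<Longrightarrow> Y \<in> B \<Longrightarrow> d (mT X Y) = mT (d X) Y + mT X (d Y)"
  using d_der by (simp add: is_derivation_on_def)
lemma d_zero: "d 0 = 0"
proof -
  have z: "0 \<in> B" using T.subspace_0[OF B_sub] .
  have "d (0 + 0) = d 0 + d 0" using d_add[OF z z] .
  then show ?thesis by simp
qed


definition Phi :: "int \<Rightarrow> 'a \<Rightarrow> int \<Rightarrow> 't" where
  "Phi i a n = act (zpow u (- n * int m)) (d (tp a (zpow u (- i + n * int m))))"

lemma act_zz: "act (zpow u a) (act (zpow u b) X) = act (zpow u (a + b)) X"
  by (simp add: act_act zadd add.commute)

lemma star:
  assumes x: "x \<in> Aeig j" and y: "y \<in> Aeig (i - j)"
  shows "Phi i (mA x y) (p + q) = mT (Phi j x p) (tp y (zpow u (- (i - j))))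
                                 + mT (tp x (zpow u (- j))) (Phi (i - j) y q)"
proof -
  define Xp where "Xp = tp x (zpow u (- j + p * int m))"
  define Yq where "Yq = tp y (zpow u (- (i - j) + q * int m))"
  define X0 where "X0 = tp x (zpow u (- j))"
  define Y0 where "Y0 = tp y (zpow u (- (i - j)))"
  have e: "(- j + p * int m) + (- (i - j) + q * int m) = - i + (p + q) * int m"
    by (simp add: algebra_simps)
  have h1: "tp (mA x y) (zpow u (- i + (p + q) * int m)) = mT Xp Yq"
    unfolding Xp_def Yq_def mT_tp zadd e ..
  have XB: "Xp \<in> B" unfolding Xp_def by (rule tpB[OF x]) simp
  have YB: "Yq \<in> B" unfolding Yq_def by (rule tpB[OF y]) simp
  have h2: "Xp = act (zpow u (p * int m)) X0" unfolding Xp_def X0_def act_tp zadd ..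
  have h3: "Yq = act (zpow u (q * int m)) Y0" unfolding Yq_def Y0_def act_tp zadd ..
  have "Phi i (mA x y) (p + q) = act (zpow u (- (p + q) * int m)) (d (mT Xp Yq))"
    unfolding Phi_def h1 ..
  also have "\<dots> = act (zpow u (- (p + q) * int m)) (mT (d Xp) Yq)
                 + act (zpow u (- (p + q) * int m)) (mT Xp (d Yq))"
    by (simp add: d_mult[OF XB YB] act_add)
  also have "act (zpow u (- (p + q) * int m)) (mT (d Xp) Yq) = mT (Phi j x p) Y0"
  proof -
    have "act (zpow u (- (p + q) * int m)) (mT (d Xp) Yq)
          = act (zpow u (- (p + q) * int m + q * int m)) (mT (d Xp) Y0)"
      unfolding h3 mT_act_right act_zz ..
    also have "- (p + q) * int m + q * int m = - p * int m" by (simp add: algebra_simps)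
    finally show ?thesis unfolding Phi_def Xp_def mT_act_left by simp
  qed
  also have "act (zpow u (- (p + q) * int m)) (mT Xp (d Yq)) = mT X0 (Phi (i - j) y q)"
  proof -
    have "act (zpow u (- (p + q) * int m)) (mT Xp (d Yq))
          = act (zpow u (- (p + q) * int m + p * int m)) (mT X0 (d Yq))"
      unfolding h2 mT_act_left act_zz ..
    also have "- (p + q) * int m + p * int m = - q * int m" by (simp add: algebra_simps)
    finally show ?thesis unfolding Phi_def Yq_def mT_act_right by simp
  qed
  finally show ?thesis unfolding Y0_def X0_def .
qed


lemma sig1_lin: "Vector_Spaces.linear sA sA \<sigma>1"
  using sigma1 by (simp add: alg_automorphism_def)
lemma sig1_mult: "\<sigma>1 (mA x y) = mA (\<sigma>1 x) (\<sigma>1 y)"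
  using sigma1 by (simp add: alg_automorphism_def)
lemma mA_lin_left: "Vector_Spaces.linear sA sA (\<lambda>x. mA x y)"
  using A_alg by (simp add: k_algebra_def bilinear_map_def)
lemma mA_lin_right: "Vector_Spaces.linear sA sA (mA x)"
  using A_alg by (simp add: k_algebra_def bilinear_map_def)

lemma Aeig_sub: "A.subspace (Aeig i)"
  unfolding A.subspace_def eigsp_def
  by (auto simp: lin_add[OF sig1_lin] lin_scale[OF sig1_lin] lin_zero[OF sig1_lin] A.scale_right_distrib mult.commute)

lemma mult_eig: "x \<in> Aeig j \<Longrightarrow> y \<in> Aeig l \<Longrightarrow> mA x y \<in> Aeig (j + l)"
  unfolding eigsp_def
  by (simp add: sig1_mult lin_scale[OF mA_lin_left] lin_scale[OF mA_lin_right] power_int_add om_nz mult.commute)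

lemma tpB_Phi: assumes "a \<in> Aeig i" shows "tp a (zpow u (- i + n * int m)) \<in> B"
proof (rule tpB)
  show "a \<in> Aeig i" by fact
  have "i + (- i + n * int m) = n * int m" by simp
  then show "(i + (- i + n * int m)) mod int m = 0" by simp
qed

lemma Phi_add: assumes a: "a \<in> Aeig i" and b: "b \<in> Aeig i" shows "Phi i (a + b) n = Phi i a n + Phi i b n"
  unfolding Phi_def tp_add_left d_add[OF tpB_Phi[OF a] tpB_Phi[OF b]] act_add ..

lemma Phi_scale: assumes a: "a \<in> Aeig i" shows "Phi i (sA c a) n = sT c (Phi i a n)"
  unfolding Phi_def tp_scale_left d_scale[OF tpB_Phi[OF a]] act_scale ..

lemma Phi_zero: "Phi i 0 n = 0"
  unfolding Phi_def tp_zero_left d_zero by (simp add: lin_zero[OF act_lin])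

definition good :: "int \<Rightarrow> 'a \<Rightarrow> bool" where
  "good i a \<longleftrightarrow> a \<in> Aeig i \<and> (\<forall>n. Phi i a (n + 1) - Phi i a n = Phi i a 1 - Phi i a 0)"

lemma good_sub: "A.subspace {a. good i a}"
proof (rule A.subspaceI)
  show "0 \<in> {a. good i a}" by (simp add: good_def Phi_zero A.subspace_0[OF Aeig_sub])
next
  fix a b assume "a \<in> {a. good i a}" "b \<in> {a. good i a}"
  then have a: "a \<in> Aeig i" "\<And>n. Phi i a (n + 1) - Phi i a n = Phi i a 1 - Phi i a 0"
    and b: "b \<in> Aeig i" "\<And>n. Phi i b (n + 1) - Phi i b n = Phi i b 1 - Phi i b 0"
    by (auto simp: good_def)
  have "a + b \<in> Aeig i" using A.subspace_add[OF Aeig_sub a(1) b(1)] .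
  moreover have "Phi i (a + b) (n + 1) - Phi i (a + b) n = Phi i (a + b) 1 - Phi i (a + b) 0" for n
  proof -
    have "Phi i (a + b) (n + 1) - Phi i (a + b) n
        = (Phi i a (n + 1) - Phi i a n) + (Phi i b (n + 1) - Phi i b n)"
      by (simp add: Phi_add[OF a(1) b(1)] algebra_simps)
    also have "\<dots> = (Phi i a 1 - Phi i a 0) + (Phi i b 1 - Phi i b 0)" using a(2) b(2) by simp
    also have "\<dots> = Phi i (a + b) 1 - Phi i (a + b) 0"
      by (simp add: Phi_add[OF a(1) b(1)] algebra_simps)
    finally show ?thesis .
  qed
  ultimately show "a + b \<in> {a. good i a}" by (simp add: good_def)
next
  fix c a assume "a \<in> {a. good i a}"
  then have a: "a \<in> Aeig i" "\<And>n. Phi i a (n + 1) - Phi i a n = Phi i a 1 - Phi i a 0"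
    by (auto simp: good_def)
  have "sA c a \<in> Aeig i" using A.subspace_scale[OF Aeig_sub a(1)] .
  moreover have "Phi i (sA c a) (n + 1) - Phi i (sA c a) n = Phi i (sA c a) 1 - Phi i (sA c a) 0" for n
    using a(2)[of n] by (simp add: Phi_scale[OF a(1)] flip: T.scale_right_diff_distrib)
  ultimately show "sA c a \<in> {a. good i a}" by (simp add: good_def)
qed

lemma good_prod:
  assumes x: "x \<in> Aeig j" and y: "y \<in> Aeig (i - j)"
  shows "good i (mA x y)"
proof -
  have "mA x y \<in> Aeig (j + (i - j))" by (rule mult_eig[OF x y])
  then have xy: "mA x y \<in> Aeig i" by simp
  have s: "\<And>p q. Phi i (mA x y) (p + q) = mT (Phi j x p) (tp y (zpow u (- (i - j))))
                                 + mT (tp x (zpow u (- j))) (Phi (i - j) y q)"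
    using star[OF x y] .
  have "Phi i (mA x y) (n + 1) - Phi i (mA x y) n = Phi i (mA x y) 1 - Phi i (mA x y) 0" for n
    using s[of n 1] s[of n 0] s[of 0 1] s[of 0 0] by simp
  then show ?thesis using xy by (simp add: good_def)
qed


lemma sigk_lin: "Vector_Spaces.linear sA sA (\<sigma>1 ^^ k)"
proof (induct k)
  case 0 then show ?case by (simp add: Vector_Spaces.linear_iff A.vector_space_axioms)
next
  case (Suc k)
  have "\<sigma>1 ^^ Suc k = \<sigma>1 \<circ> (\<sigma>1 ^^ k)" by simp
  then show ?case using Vector_Spaces.linear_compose[OF Suc sig1_lin] by metis
qed

definition pr :: "int \<Rightarrow> 'a \<Rightarrow> 'a" where
  "pr i x = sA (inverse (of_nat m)) (\<Sum>k<m. sA ((\<omega> powi (- i)) ^ k) ((\<sigma>1 ^^ k) x))"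

lemma pr_add: "pr i (x + y) = pr i x + pr i y"
  by (simp add: pr_def lin_add[OF sigk_lin] A.scale_right_distrib sum.distrib)

lemma pr_scale: "pr i (sA c x) = sA c (pr i x)"
  by (simp add: pr_def lin_scale[OF sigk_lin] A.scale_sum_right A.scale_left_commute[of _ c] mult_ac)

lemma pr_lin: "Vector_Spaces.linear sA sA (pr i)"
  by (simp add: Vector_Spaces.linear_iff A.vector_space_axioms pr_add pr_scale)

lemma sigk_eig: "x \<in> Aeig j \<Longrightarrow> (\<sigma>1 ^^ k) x = sA ((\<omega> powi j) ^ k) x"
proof (induct k)
  case 0 then show ?case by simp
next
  case (Suc k)
  then show ?case by (simp add: lin_scale[OF sig1_lin] eigsp_def mult.commute)
qed

lemma m_inv: "sA (inverse (of_nat m)) (sA (of_nat m) x) = x"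
  using char by simp

lemma pr_eig:
  assumes x: "x \<in> Aeig j"
  shows "pr i x = (if int m dvd (j - i) then x else 0)"
proof -
  have "(\<Sum>k<m. sA ((\<omega> powi (- i)) ^ k) ((\<sigma>1 ^^ k) x))
        = (\<Sum>k<m. sA ((\<omega> powi (j - i)) ^ k) x)"
  proof (rule sum.cong[OF refl])
    fix k
    have "(\<omega> powi (- i)) ^ k * (\<omega> powi j) ^ k = (\<omega> powi (j - i)) ^ k"
      by (simp add: power_mult_distrib[symmetric] power_int_add[symmetric] om_nz)
    then show "sA ((\<omega> powi (- i)) ^ k) ((\<sigma>1 ^^ k) x) = sA ((\<omega> powi (j - i)) ^ k) x"
      by (simp add: sigk_eig[OF x])
  qed
  also have "\<dots> = sA (\<Sum>k<m. (\<omega> powi (j - i)) ^ k) x" by (simp add: A.scale_sum_left)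
  also have "\<dots> = sA (if int m dvd (j - i) then of_nat m else 0) x" by (simp add: orth[OF omega m_pos])
  finally show ?thesis unfolding pr_def using m_inv by simp
qed

lemma swap_pow: "(\<omega> powi (- int r)) ^ k = (\<omega> powi (- int k)) ^ r"
proof -
  have "(\<omega> powi (- int r)) ^ k = \<omega> powi (- int r * int k)"
    by (metis power_int_mult power_int_of_nat)
  also have "\<dots> = \<omega> powi (- int k * int r)" by (simp add: mult.commute)
  also have "\<dots> = (\<omega> powi (- int k)) ^ r" by (metis power_int_mult power_int_of_nat)
  finally show ?thesis .
qed

lemma pr_sum: "(\<Sum>r<m. pr (int r) x) = x"
proof -
  have "(\<Sum>r<m. pr (int r) x)
      = sA (inverse (of_nat m)) (\<Sum>r<m. \<Sum>k<m. sA ((\<omega> powi (- int r)) ^ k) ((\<sigma>1 ^^ k) x))"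
    by (simp add: pr_def A.scale_sum_right)
  also have "(\<Sum>r<m. \<Sum>k<m. sA ((\<omega> powi (- int r)) ^ k) ((\<sigma>1 ^^ k) x))
      = (\<Sum>k<m. \<Sum>r<m. sA ((\<omega> powi (- int k)) ^ r) ((\<sigma>1 ^^ k) x))"
    by (subst sum.swap) (simp add: swap_pow)
  also have "\<dots> = (\<Sum>k<m. sA (\<Sum>r<m. (\<omega> powi (- int k)) ^ r) ((\<sigma>1 ^^ k) x))"
    by (simp add: A.scale_sum_left)
  also have "\<dots> = (\<Sum>k<m. if k = 0 then sA (of_nat m) ((\<sigma>1 ^^ k) x) else 0)"
  proof (rule sum.cong[OF refl])
    fix k assume "k \<in> {..<m}"
    then have "int m dvd - int k \<longleftrightarrow> k = 0" by auto
    then show "sA (\<Sum>r<m. (\<omega> powi (- int k)) ^ r) ((\<sigma>1 ^^ k) x)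
             = (if k = 0 then sA (of_nat m) ((\<sigma>1 ^^ k) x) else 0)"
      by (simp add: orth[OF omega m_pos])
  qed
  also have "\<dots> = sA (of_nat m) x" using m_pos by (simp add: sum.delta)
  finally show ?thesis using m_inv by simp
qed

lemma sum_shift_periodic:
  fixes g :: "nat \<Rightarrow> 'b::ab_group_add"
  assumes "g n = g 0"
  shows "(\<Sum>k<n. g (Suc k)) = (\<Sum>k<n. g k)"
proof -
  have "g 0 + (\<Sum>k<n. g (Suc k)) = (\<Sum>k<n. g k) + g n"
    using sum.lessThan_Suc_shift[of g n] sum.lessThan_Suc[of g n] by simp
  then show ?thesis using assms by (simp add: add.commute)
qed

lemma pr_in: "pr i x \<in> Aeig i"
proof -
  define c where "c = \<omega> powi (- i)"
  define e where "e = \<omega> powi i"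
  have ec: "e * c = 1" unfolding e_def c_def by (simp add: power_int_minus om_nz)
  have cm: "c ^ m = 1"
  proof -
    have "c ^ m = \<omega> powi (- i * int m)" unfolding c_def by (metis power_int_mult power_int_of_nat)
    also have "\<dots> = (\<omega> ^ m) powi (- i)" by (metis power_int_mult power_int_of_nat mult.commute)
    finally show ?thesis using omega by (simp add: primitive_root_of_unity_def)
  qed
  define g where "g k = sA (e * c ^ k) ((\<sigma>1 ^^ k) x)" for k
  have gm: "g m = g 0" unfolding g_def using cm sigma1_m by simp
  have "\<sigma>1 (pr i x) = sA (inverse (of_nat m)) (\<Sum>k<m. sA (c ^ k) (\<sigma>1 ((\<sigma>1 ^^ k) x)))"
    unfolding pr_def c_def[symmetric] lin_scale[OF sig1_lin] lin_sum[OF sig1_lin] ..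
  also have "(\<Sum>k<m. sA (c ^ k) (\<sigma>1 ((\<sigma>1 ^^ k) x))) = (\<Sum>k<m. g (Suc k))"
  proof (rule sum.cong[OF refl])
    fix k
    have "e * c ^ Suc k = c ^ k" using ec by (simp add: mult.assoc[symmetric])
    then show "sA (c ^ k) (\<sigma>1 ((\<sigma>1 ^^ k) x)) = g (Suc k)" unfolding g_def by simp
  qed
  also have "\<dots> = (\<Sum>k<m. g k)" by (rule sum_shift_periodic[OF gm])
  also have "\<dots> = sA e (\<Sum>k<m. sA (c ^ k) ((\<sigma>1 ^^ k) x))"
    unfolding g_def by (simp add: A.scale_sum_right)
  finally have "\<sigma>1 (pr i x) = sA e (pr i x)"
    unfolding pr_def c_def[symmetric] by (simp add: A.scale_left_commute[of _ e])
  then show ?thesis by (simp add: eigsp_def e_def)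
qed


definition P :: "int \<Rightarrow> 'a set" where
  "P i = {mA x y | x y j. x \<in> Aeig j \<and> y \<in> Aeig (i - j)}"

lemma pr_prod: "pr i (mA x y) \<in> A.span (P i)"
proof -
  have "mA x y = mA (\<Sum>r<m. pr (int r) x) (\<Sum>s<m. pr (int s) y)" by (simp add: pr_sum)
  also have "\<dots> = (\<Sum>s<m. \<Sum>r<m. mA (pr (int r) x) (pr (int s) y))"
    unfolding lin_sum[OF mA_lin_left] lin_sum[OF mA_lin_right] ..
  finally have "pr i (mA x y) = (\<Sum>s<m. \<Sum>r<m. pr i (mA (pr (int r) x) (pr (int s) y)))"
    by (simp add: lin_sum[OF pr_lin])
  also have "\<dots> \<in> A.span (P i)"
  proof (intro A.span_sum)
    fix s r
    have mem: "mA (pr (int r) x) (pr (int s) y) \<in> Aeig (int r + int s)"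
      by (rule mult_eig[OF pr_in pr_in])
    show "pr i (mA (pr (int r) x) (pr (int s) y)) \<in> A.span (P i)"
    proof (cases "int m dvd (int r + int s - i)")
      case True
      then have "int s mod int m = (i - int r) mod int m"
        by (metis add_diff_cancel_left' diff_diff_eq2 dvd_imp_mod_0 mod_0 mod_eq_dvd_iff diff_add_cancel)
      then have "pr (int s) y \<in> Aeig (i - int r)" using pr_in eigsp_cong by metis
      then have "mA (pr (int r) x) (pr (int s) y) \<in> P i" unfolding P_def using pr_in by blast
      then show ?thesis using True pr_eig[OF mem] by (simp add: A.span_base)
    next
      case False
      then show ?thesis using pr_eig[OF mem] by (simp add: A.span_zero)
    qed
  qed
  finally show ?thesis .
qed

lemma all_good: assumes a: "a \<in> Aeig i" shows "good i a"
proof -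
  have Q: "A.subspace {z. pr i z \<in> A.span (P i)}"
    by (rule A.subspaceI) (simp_all add: lin_zero[OF pr_lin] pr_add pr_scale A.span_zero A.span_add A.span_scale)
  have "a \<in> A.span {mA x y | x y. True}" using A_perfect by (simp add: perfect_algebra_def)
  then have "pr i a \<in> A.span (P i)"
    by (rule A.span_induct[where P = "\<lambda>z. pr i z \<in> A.span (P i)"]) (use Q pr_prod in auto)
  moreover have "pr i a = a" using pr_eig[OF a, of i] by simp
  ultimately have "a \<in> A.span (P i)" by simp
  moreover have "A.span (P i) \<subseteq> {a. good i a}"
    by (rule A.span_minimal[OF _ good_sub]) (auto simp: P_def intro: good_prod)
  ultimately show ?thesis by auto
qed


lemma Phi_affine:
  assumes a: "a \<in> Aeig i"
  shows "Phi i a n = Phi i a 0 + sT (of_int n) (Phi i a 1 - Phi i a 0)"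
proof -
  have g: "\<And>n. Phi i a (n + 1) - Phi i a n = Phi i a 1 - Phi i a 0"
    using all_good[OF a] by (simp add: good_def)
  show ?thesis
  proof (induct n rule: int_induct[where k=0])
    case base then show ?case by simp
  next
    case (step1 n)
    have "Phi i a (n + 1) = Phi i a n + (Phi i a 1 - Phi i a 0)" using g[of n] by (simp add: algebra_simps)
    also have "\<dots> = Phi i a 0 + sT (of_int (n + 1)) (Phi i a 1 - Phi i a 0)"
      using step1(2) by (simp add: T.scale_left_distrib)
    finally show ?case .
  next
    case (step2 n)
    have "Phi i a (n - 1) = Phi i a n - (Phi i a 1 - Phi i a 0)" using g[of "n - 1"] by (simp add: algebra_simps)
    also have "\<dots> = Phi i a 0 + sT (of_int (n - 1)) (Phi i a 1 - Phi i a 0)"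
      using step2(2) by (simp add: T.scale_left_diff_distrib)
    finally show ?case .
  qed
qed

lemma Phi0: "Phi i a 0 = d (tp a (zpow u (- i)))"
  by (simp add: Phi_def act_one)

lemma part1:
  fixes n i :: int
  assumes a: "a \<in> Aeig i"
  shows "act (zpow u (- n * m)) (d (tp a (zpow u (- i + n * m))))
              + act (zpow u (n * m)) (d (tp a (zpow u (- i - n * m))))
            = sT 2 (d (tp a (zpow u (- i))))
          \<and> act (zpow u (- n * m)) (d (tp a (zpow u (- i + n * m))))
              + sT (of_int n) (act (zpow u m) (d (tp a (zpow u (- i - m)))))
            = sT (1 + of_int n) (d (tp a (zpow u (- i))))
          \<and> act (zpow u (- n * m)) (d (tp a (zpow u (- i + n * m))))
              - sT (of_int n) (act (zpow u (- m)) (d (tp a (zpow u (- i + m)))))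
            = sT (1 - of_int n) (d (tp a (zpow u (- i))))"
proof -
  define P0 where "P0 = Phi i a 0"
  define c where "c = Phi i a 1 - Phi i a 0"
  have aff: "\<And>n. Phi i a n = P0 + sT (of_int n) c" unfolding P0_def c_def using Phi_affine[OF a] .
  have e1: "act (zpow u (- n * m)) (d (tp a (zpow u (- i + n * m)))) = Phi i a n"
    by (simp add: Phi_def)
  have e2: "act (zpow u (n * m)) (d (tp a (zpow u (- i - n * m)))) = Phi i a (- n)"
    by (simp add: Phi_def)
  have e3: "act (zpow u m) (d (tp a (zpow u (- i - m)))) = Phi i a (- 1)"
    by (simp add: Phi_def)
  have e4: "act (zpow u (- m)) (d (tp a (zpow u (- i + m)))) = Phi i a 1"
    by (simp add: Phi_def)
  have e0: "d (tp a (zpow u (- i))) = P0" unfolding P0_def Phi0 ..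
  have two: "sT 2 P0 = P0 + P0"
    using T.scale_left_distrib[of 1 1 P0] by (simp add: one_add_one)
  show ?thesis unfolding e1 e2 e3 e4 e0 aff
    by (simp add: two T.scale_left_distrib T.scale_right_distrib T.scale_left_diff_distrib
        T.scale_right_diff_distrib algebra_simps)
qed

lemma part2:
  assumes b: "b \<in> Aeig e" and f: "f = e \<or> f = e + int m"
  shows "act (zpow u e) (act (zpow u (- int m)) (d (tp b (zpow u (- e + int m)))) - d (tp b (zpow u (- e))))
       = act (zpow u f) (act (zpow u (- int m)) (d (tp b (zpow u (- f + int m)))) - d (tp b (zpow u (- f))))"
  using f
proof
  assume "f = e" then show ?thesis by simp
next
  assume f: "f = e + int m"
  define P0 where "P0 = Phi e b 0"
  define c where "c = Phi e b 1 - Phi e b 0"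
  have aff: "\<And>n. Phi e b n = P0 + sT (of_int n) c" unfolding P0_def c_def using Phi_affine[OF b] .
  have e1: "act (zpow u (- int m)) (d (tp b (zpow u (- e + int m)))) = Phi e b 1"
    by (simp add: Phi_def)
  have e0: "d (tp b (zpow u (- e))) = P0" unfolding P0_def Phi0 ..
  have e3: "act (zpow u m) (d (tp b (zpow u (- e - m)))) = Phi e b (- 1)"
    by (simp add: Phi_def)
  have ff: "- f + int m = - e" "- f = - e - int m" using f by simp_all
  have "act (zpow u f) (act (zpow u (- int m)) (d (tp b (zpow u (- f + int m)))) - d (tp b (zpow u (- f))))
      = act (zpow u e) (act (zpow u (int m)) (act (zpow u (- int m)) P0 - d (tp b (zpow u (- e - int m)))))"
    unfolding ff by (simp add: act_zz f e0)
  also have "\<dots> = act (zpow u e) (P0 - Phi e b (- 1))"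
    unfolding act_diff act_zz e3 by (simp add: act_one)
  finally show ?thesis unfolding e1 e0 aff
    by (simp add: T.scale_left_distrib T.scale_right_distrib T.scale_left_diff_distrib
        T.scale_right_diff_distrib algebra_simps)
qed

end

theorem lemma4p6:
  fixes sA :: "'k::field \<Rightarrow> 'a::ab_group_add \<Rightarrow> 'a" and mA :: "'a \<Rightarrow> 'a \<Rightarrow> 'a"
    and sS :: "'k \<Rightarrow> 's::comm_ring_1 \<Rightarrow> 's"
    and sT :: "'k \<Rightarrow> 't::ab_group_add \<Rightarrow> 't" and tp :: "'a \<Rightarrow> 's \<Rightarrow> 't"
    and mT :: "'t \<Rightarrow> 't \<Rightarrow> 't" and act :: "'s \<Rightarrow> 't \<Rightarrow> 't"
    and m :: nat and \<omega> :: 'k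
    and \<sigma>1 :: "'a \<Rightarrow> 'a" and \<sigma>2 :: "'s \<Rightarrow> 's"
    and u :: 's and d :: "'t \<Rightarrow> 't"
  assumes m_pos: "0 < m" and char: "of_nat m \<noteq> (0::'k)"
    and omega: "primitive_root_of_unity m \<omega>"
    and A_alg: "k_algebra sA mA" and A_perfect: "perfect_algebra sA mA"
    and S_alg: "comm_unital_k_algebra sS"
    and tensor: "is_tensor_product sA sS sT tp"
    and mT_bil: "bilinear_map sT sT sT mT"
    and mT_tp: "\<And>a b s t. mT (tp a s) (tp b t) = tp (mA a b) (s * t)"
    and act_lin: "\<And>s. Vector_Spaces.linear sT sT (act s)"
    and act_tp: "\<And>s' a s. act s' (tp a s) = tp a (s * s')"
    and sigma1: "alg_automorphism sA mA \<sigma>1" and sigma1_m: "\<sigma>1 ^^ m = id"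
    and sigma2: "alg_automorphism sS (*) \<sigma>2" and sigma2_one: "\<sigma>2 1 = 1"
    and sigma2_m: "\<sigma>2 ^^ m = id"
    and u_deg: "u \<in> eigsp sS \<sigma>2 \<omega> 1" and u_unit: "\<exists>v. u * v = 1"
    and d_der: "is_derivation_on sT mT (fixed_subalg sT tp \<omega> sA \<sigma>1 sS \<sigma>2) d"
  shows "(\<forall>i n :: int. \<forall>a \<in> eigsp sA \<sigma>1 \<omega> i.
            act (zpow u (- n * m)) (d (tp a (zpow u (- i + n * m))))
              + act (zpow u (n * m)) (d (tp a (zpow u (- i - n * m))))
            = sT 2 (d (tp a (zpow u (- i))))
          \<and> act (zpow u (- n * m)) (d (tp a (zpow u (- i + n * m))))
              + sT (of_int n) (act (zpow u m) (d (tp a (zpow u (- i - m)))))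
            = sT (1 + of_int n) (d (tp a (zpow u (- i))))
          \<and> act (zpow u (- n * m)) (d (tp a (zpow u (- i + n * m))))
              - sT (of_int n) (act (zpow u (- m)) (d (tp a (zpow u (- i + m)))))
            = sT (1 - of_int n) (d (tp a (zpow u (- i)))))
       \<and> (\<forall>i j :: int. \<forall>ai \<in> eigsp sA \<sigma>1 \<omega> i. \<forall>aj \<in> eigsp sA \<sigma>1 \<omega> j.
            act (zpow u (eps m (i + j)))
              (act (zpow u (- m)) (d (tp (mA ai aj) (zpow u (- eps m (i + j) + m))))
               - d (tp (mA ai aj) (zpow u (- eps m (i + j)))))
            = act (zpow u (eps m i + eps m j))
              (act (zpow u (- m)) (d (tp (mA ai aj) (zpow u (- eps m i - eps m j + m))))
               - d (tp (mA ai aj) (zpow u (- eps m i - eps m j)))))"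
  proof -
  interpret L: L4 sA mA sS sT tp mT act m \<omega> \<sigma>1 \<sigma>2 u d
    by (rule L4.intro) (rule assms)+
  have P1: "\<forall>i n :: int. \<forall>a \<in> eigsp sA \<sigma>1 \<omega> i.
            act (zpow u (- n * m)) (d (tp a (zpow u (- i + n * m))))
              + act (zpow u (n * m)) (d (tp a (zpow u (- i - n * m))))
            = sT 2 (d (tp a (zpow u (- i))))
          \<and> act (zpow u (- n * m)) (d (tp a (zpow u (- i + n * m))))
              + sT (of_int n) (act (zpow u m) (d (tp a (zpow u (- i - m)))))
            = sT (1 + of_int n) (d (tp a (zpow u (- i))))
          \<and> act (zpow u (- n * m)) (d (tp a (zpow u (- i + n * m))))
              - sT (of_int n) (act (zpow u (- m)) (d (tp a (zpow u (- i + m)))))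
            = sT (1 - of_int n) (d (tp a (zpow u (- i))))"
    using L.part1 by blast
  have P2: "act (zpow u (eps m (i + j)))
              (act (zpow u (- m)) (d (tp (mA ai aj) (zpow u (- eps m (i + j) + m))))
               - d (tp (mA ai aj) (zpow u (- eps m (i + j)))))
            = act (zpow u (eps m i + eps m j))
              (act (zpow u (- m)) (d (tp (mA ai aj) (zpow u (- eps m i - eps m j + m))))
               - d (tp (mA ai aj) (zpow u (- eps m i - eps m j))))"
    if ai: "ai \<in> eigsp sA \<sigma>1 \<omega> i" and aj: "aj \<in> eigsp sA \<sigma>1 \<omega> j" for i j ai aj
  proof -
    have "mA ai aj \<in> eigsp sA \<sigma>1 \<omega> (i + j)" by (rule L.mult_eig[OF ai aj])
    moreover have "eigsp sA \<sigma>1 \<omega> (i + j) = eigsp sA \<sigma>1 \<omega> (eps m (i + j))"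
      by (rule L.eigsp_cong) (simp add: eps_def)
    ultimately have b: "mA ai aj \<in> eigsp sA \<sigma>1 \<omega> (eps m (i + j))" by simp
    have f: "eps m i + eps m j = eps m (i + j) \<or> eps m i + eps m j = eps m (i + j) + int m"
    proof -
      define s where "s = i mod int m + j mod int m"
      have s0: "0 \<le> s" "s < 2 * int m" unfolding s_def using m_pos by simp_all
        (smt (verit) pos_mod_bound of_nat_0_less_iff)
      have sm: "s mod int m = (i + j) mod int m" unfolding s_def by (simp add: mod_add_eq)
      show ?thesis
      proof (cases "s < int m")
        case True
        then have "s mod int m = s" using s0 by simp
        then show ?thesis using sm by (simp add: eps_def s_def)
      next
        case False
        then have "0 \<le> s - int m" "s - int m < int m" using s0 by simp_all
        then have "(s - int m) mod int m = s - int m" by (rule mod_pos_pos_trivial)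
        moreover have "(s - int m) mod int m = s mod int m" by (simp add: mod_diff_right_eq[symmetric])
        ultimately show ?thesis using sm by (simp add: eps_def s_def)
      qed
    qed
    have r: "- eps m i - eps m j + int m = - (eps m i + eps m j) + int m"
            "- eps m i - eps m j = - (eps m i + eps m j)" by simp_all
    show ?thesis unfolding r by (rule L.part2[OF b f])
  qed
  show ?thesis using P1 P2 by blast
qed

end
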